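(* For every $J\subseteq[n]$, the hyperplane arrangement $\mathcal B_J$ is free.
   Context: A hyperplane arrangement in $\mathbb C^n$ is a finite set of linear hyperplanes; $H_\alpha$ is the zero set of a nonzero linear form $\alpha$. $\operatorname{Der}(\mathbb C[\mathbf x_n])=\bigoplus_{i=1}^n\mathbb C[\mathbf x_n]\partial_i$ is the module of derivations of $\mathbb C[x_1,\dots,x_n]$, and for an arrangement $\mathcal A$, $\operatorname{Der}(\mathcal A)=\{\delta\in\operatorname{Der}(\mathbb C[\mathbf x_n]):\alpha\mid\delta(\alpha)\text{ for all }H_\alpha\in\mathcal A\}$. $\mathcal A$ is free if $\operatorname{Der}(\mathcal A)$ is a free $\mathbb C[\mathbf x_n]$-module. For $J\subseteq[n]$, $\mathcal B_J$ is the arrangement consisting of $H_{x_j}$ for $j\in[n]\setminus J$ together with $H_{x_j-x_i}$ and $H_{x_j+x_i}$ for all $j\in[n]\setminus J$ and $j<i\le n$. *)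

theory Defs
  imports Complex_Main "HOL-Library.Poly_Mapping"
begin

type_synonym mpoly = "(nat \<Rightarrow>\<^sub>0 nat) \<Rightarrow>\<^sub>0 complex"

definition Const :: "complex \<Rightarrow> mpoly" where
  "Const c = Poly_Mapping.single 0 c"

definition Var :: "nat \<Rightarrow> mpoly" where
  "Var i = Poly_Mapping.single (Poly_Mapping.single i 1) 1"

definition polyring :: "nat \<Rightarrow> mpoly set" where
  "polyring n = {p :: mpoly. \<forall>m \<in> Poly_Mapping.keys p. Poly_Mapping.keys m \<subseteq> {1..n}}"

definition linform :: "nat \<Rightarrow> (nat \<Rightarrow> complex) \<Rightarrow> mpoly" where
  "linform n a = (\<Sum>i=1..n. Const (a i) * Var i)"

text \<open>A derivation sum theta_i d_i of C[x_1..x_n] is given by its coefficient tuple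
(theta_1,...,theta_n); coordinates outside 1..n are 0.\<close>
definition derivs :: "nat \<Rightarrow> (nat \<Rightarrow> mpoly) set" where
  "derivs n = {\<theta>. (\<forall>i\<in>{1..n}. \<theta> i \<in> polyring n) \<and> (\<forall>i. i \<notin> {1..n} \<longrightarrow> \<theta> i = 0)}"

definition apply_der :: "nat \<Rightarrow> (nat \<Rightarrow> mpoly) \<Rightarrow> (nat \<Rightarrow> complex) \<Rightarrow> mpoly" where
  "apply_der n \<theta> a = (\<Sum>i=1..n. Const (a i) * \<theta> i)"

text \<open>Der(A) for an arrangement A given as a set of defining linear forms
(coefficient vectors); divisibility is taken in C[x_1..x_n].\<close>
definition Der :: "nat \<Rightarrow> (nat \<Rightarrow> complex) set \<Rightarrow> (nat \<Rightarrow> mpoly) set" where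
  "Der n A = {\<theta> \<in> derivs n. \<forall>a\<in>A. \<exists>g\<in>polyring n. apply_der n \<theta> a = linform n a * g}"

definition free_submodule :: "nat \<Rightarrow> (nat \<Rightarrow> mpoly) set \<Rightarrow> bool" where
  "free_submodule n M \<longleftrightarrow>
     (\<exists>B \<subseteq> M.
        (\<forall>\<theta>\<in>M. \<exists>F c. finite F \<and> F \<subseteq> B \<and> (\<forall>b\<in>F. c b \<in> polyring n) \<and>
                     \<theta> = (\<lambda>i. \<Sum>b\<in>F. c b * b i)) \<and>
        (\<forall>F c. finite F \<longrightarrow> F \<subseteq> B \<longrightarrow> (\<forall>b\<in>F. c b \<in> polyring n) \<longrightarrow>
               (\<lambda>i. \<Sum>b\<in>F. c b * b i) = (\<lambda>i. 0) \<longrightarrow> (\<forall>b\<in>F. c b = 0)))"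

definition B_arr :: "nat \<Rightarrow> nat set \<Rightarrow> (nat \<Rightarrow> complex) set" where
  "B_arr n J =
     {(\<lambda>k. if k = j then 1 else 0) | j. j \<in> {1..n} - J}
   \<union> {(\<lambda>k. if k = j then 1 else if k = i then -1 else 0) | j i. j \<in> {1..n} - J \<and> j < i \<and> i \<le> n}
   \<union> {(\<lambda>k. if k = j then 1 else if k = i then 1 else 0) | j i. j \<in> {1..n} - J \<and> j < i \<and> i \<le> n}"

end

theory Submission
  imports Defs
begin

definition mmono :: "(nat \<Rightarrow> mpoly) \<Rightarrow> (nat \<Rightarrow>\<^sub>0 nat) \<Rightarrow> mpoly" where
  "mmono s m = (\<Prod>i\<in>Poly_Mapping.keys m. s i ^ Poly_Mapping.lookup m i)"

definition subst :: "(nat \<Rightarrow> mpoly) \<Rightarrow> mpoly \<Rightarrow> mpoly" where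
  "subst s p = (\<Sum>m\<in>Poly_Mapping.keys p. Const (Poly_Mapping.lookup p m) * mmono s m)"

lemma Const_0[simp]: "Const 0 = 0" by (simp add: Const_def)
lemma Const_1[simp]: "Const 1 = 1" by (simp add: Const_def)
lemma Const_add: "Const (a + b) = Const a + Const b" by (simp add: Const_def single_add)
lemma Const_mult: "Const (a * b) = Const a * Const b" by (simp add: Const_def mult_single)
lemma Const_uminus: "Const (- a) = - Const a" by (simp add: Const_def single_uminus)

lemma mmono_superset:
  assumes "finite K" "Poly_Mapping.keys m \<subseteq> K"
  shows "mmono s m = (\<Prod>i\<in>K. s i ^ Poly_Mapping.lookup m i)"
  unfolding mmono_def
  by (rule prod.mono_neutral_left) (use assms in \<open>auto simp: in_keys_iff\<close>)

lemma subst_superset: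
  assumes "finite K" "Poly_Mapping.keys p \<subseteq> K"
  shows "subst s p = (\<Sum>m\<in>K. Const (Poly_Mapping.lookup p m) * mmono s m)"
  unfolding subst_def
  by (rule sum.mono_neutral_left) (use assms in \<open>auto simp: in_keys_iff\<close>)

lemma keys_add_nat: "Poly_Mapping.keys ((a::nat \<Rightarrow>\<^sub>0 nat) + b) = Poly_Mapping.keys a \<union> Poly_Mapping.keys b"
  by (auto simp: in_keys_iff lookup_add)

lemma mmono_add: "mmono s (a + b) = mmono s a * mmono s b"
proof -
  let ?K = "Poly_Mapping.keys a \<union> Poly_Mapping.keys b"
  have "mmono s (a + b) = (\<Prod>i\<in>?K. s i ^ Poly_Mapping.lookup (a+b) i)"
    by (rule mmono_superset) (auto simp: keys_add_nat)
  also have "\<dots> = (\<Prod>i\<in>?K. s i ^ Poly_Mapping.lookup a i * s i ^ Poly_Mapping.lookup b i)"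
    by (simp add: lookup_add power_add)
  also have "\<dots> = (\<Prod>i\<in>?K. s i ^ Poly_Mapping.lookup a i) * (\<Prod>i\<in>?K. s i ^ Poly_Mapping.lookup b i)"
    by (simp add: prod.distrib)
  also have "\<dots> = mmono s a * mmono s b"
    using mmono_superset[of ?K a s] mmono_superset[of ?K b s] by simp
  finally show ?thesis .
qed

lemma mmono_zero[simp]: "mmono s 0 = 1" by (simp add: mmono_def)

lemma subst_add: "subst s (p + q) = subst s p + subst s q"
proof -
  let ?K = "Poly_Mapping.keys p \<union> Poly_Mapping.keys q"
  have "subst s (p + q) = (\<Sum>m\<in>?K. Const (Poly_Mapping.lookup (p+q) m) * mmono s m)"
    by (rule subst_superset) (auto dest: keys_add[THEN subsetD])
  also have "\<dots> = (\<Sum>m\<in>?K. Const (Poly_Mapping.lookup p m) * mmono s m + Const (Poly_Mapping.lookup q m) * mmono s m)"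
    by (simp add: lookup_add Const_add distrib_right)
  also have "\<dots> = subst s p + subst s q"
    using subst_superset[of ?K p s] subst_superset[of ?K q s] by (simp add: sum.distrib)
  finally show ?thesis .
qed

lemma subst_zero[simp]: "subst s 0 = 0" by (simp add: subst_def)

lemma subst_sum: "subst s (sum f A) = (\<Sum>x\<in>A. subst s (f x))"
  by (induction A rule: infinite_finite_induct) (auto simp: subst_add)

lemma subst_single: "subst s (Poly_Mapping.single m c) = Const c * mmono s m"
proof -
  have "subst s (Poly_Mapping.single m c) = (\<Sum>m'\<in>{m}. Const (Poly_Mapping.lookup (Poly_Mapping.single m c) m') * mmono s m')"
    by (rule subst_superset) auto
  then show ?thesis by simp
qed

lemma poly_mapping_rep: "p = (\<Sum>m\<in>Poly_Mapping.keys p. Poly_Mapping.single m (Poly_Mapping.lookup p m))"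
  by (rule poly_mapping_eqI) (auto simp: lookup_sum lookup_single when_def in_keys_iff sum.delta)

lemma subst_mult: "subst s (p * q) = subst s p * subst s q"
proof -
  let ?A = "Poly_Mapping.keys p" and ?B = "Poly_Mapping.keys q"
  have "p * q = (\<Sum>a\<in>?A. Poly_Mapping.single a (Poly_Mapping.lookup p a)) * (\<Sum>b\<in>?B. Poly_Mapping.single b (Poly_Mapping.lookup q b))"
    by (metis poly_mapping_rep)
  also have "\<dots> = (\<Sum>a\<in>?A. \<Sum>b\<in>?B. Poly_Mapping.single (a+b) (Poly_Mapping.lookup p a * Poly_Mapping.lookup q b))"
    by (simp add: sum_product mult_single)
  finally have "subst s (p * q) = (\<Sum>a\<in>?A. \<Sum>b\<in>?B. Const (Poly_Mapping.lookup p a) * mmono s a * (Const (Poly_Mapping.lookup q b) * mmono s b))"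
    by (simp add: subst_sum subst_single mmono_add Const_mult mult_ac)
  also have "\<dots> = subst s p * subst s q"
    by (simp add: subst_def sum_product)
  finally show ?thesis .
qed

lemma subst_Const[simp]: "subst s (Const c) = Const c"
  by (simp add: Const_def subst_single)

lemma subst_one[simp]: "subst s 1 = 1"
  using subst_Const[of s 1] by simp

lemma subst_Var[simp]: "subst s (Var i) = s i"
  by (simp add: Var_def subst_single mmono_def)

lemma subst_uminus: "subst s (- p) = - subst s p"
  using subst_add[of s "-p" p] by (simp add: eq_neg_iff_add_eq_0)

lemma subst_diff: "subst s (p - q) = subst s p - subst s q"
  using subst_add[of s p "-q"] by (simp add: subst_uminus)

lemma subst_prod: "subst s (prod f A) = (\<Prod>x\<in>A. subst s (f x))"
  by (induction A rule: infinite_finite_induct) (auto simp: subst_mult)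

lemma subst_power: "subst s (p ^ e) = subst s p ^ e"
  by (induction e) (auto simp: subst_mult)

lemma Var_power: "Var i ^ e = Poly_Mapping.single (Poly_Mapping.single i e) 1"
proof (induction e)
  case (Suc e)
  have "Poly_Mapping.single i (Suc e) = Poly_Mapping.single i 1 + Poly_Mapping.single i e"
    by (simp add: single_add[symmetric])
  with Suc show ?case by (simp add: Var_def mult_single)
qed simp

lemma prod_single: "(\<Prod>i\<in>K. Poly_Mapping.single (g i) (1::complex)) = Poly_Mapping.single (\<Sum>i\<in>K. g i) 1"
  by (induction K rule: infinite_finite_induct) (auto simp: mult_single)

lemma mmono_Var: "mmono Var m = Poly_Mapping.single m 1"
proof -
  have "mmono Var m = Poly_Mapping.single (\<Sum>i\<in>Poly_Mapping.keys m. Poly_Mapping.single i (Poly_Mapping.lookup m i)) 1"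
    by (simp add: mmono_def Var_power prod_single)
  then show ?thesis by (metis poly_mapping_rep)
qed

lemma subst_Var_id: "subst Var p = p"
proof -
  have "subst Var p = (\<Sum>m\<in>Poly_Mapping.keys p. Poly_Mapping.single m (Poly_Mapping.lookup p m))"
    by (simp add: subst_def mmono_Var Const_def mult_single)
  then show ?thesis by (metis poly_mapping_rep)
qed


lemma dvd_diff_mult:
  fixes d :: "'a::comm_ring_1"
  assumes "d dvd a - b" "d dvd c - e"
  shows "d dvd a * c - b * e"
proof -
  have "a * c - b * e = a * (c - e) + (a - b) * e" by (simp add: algebra_simps)
  then show ?thesis using assms by (simp add: dvd_add dvd_mult dvd_mult2)
qed

lemma dvd_diff_power:
  fixes d :: "'a::comm_ring_1"
  assumes "d dvd a - b"
  shows "d dvd a ^ e - b ^ e"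
  by (induction e) (auto intro: dvd_diff_mult assms)

lemma dvd_diff_prod:
  fixes d :: "'a::comm_ring_1"
  assumes "\<And>x. x \<in> A \<Longrightarrow> d dvd f x - g x"
  shows "d dvd prod f A - prod g A"
  using assms by (induction A rule: infinite_finite_induct) (auto intro: dvd_diff_mult)

lemma subst_cong_dvd:
  assumes "\<And>i. d dvd s i - t i"
  shows "d dvd subst s p - subst t p"
proof -
  have "subst s p - subst t p = (\<Sum>m\<in>Poly_Mapping.keys p. Const (Poly_Mapping.lookup p m) * (mmono s m - mmono t m))"
    by (simp add: subst_def sum_subtractf algebra_simps)
  also have "d dvd \<dots>"
    by (intro dvd_sum dvd_mult) (auto simp: mmono_def intro!: dvd_diff_prod dvd_diff_power assms)
  finally show ?thesis .
qed

lemma subst_kernel: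
  assumes "subst (Var(k := c)) f = 0"
  shows "(Var k - c) dvd f"
proof -
  have "(Var k - c) dvd subst Var f - subst (Var(k := c)) f"
    by (rule subst_cong_dvd) auto
  then show ?thesis using assms by (simp add: subst_Var_id)
qed

lemma polyring_0[simp]: "0 \<in> polyring n" by (simp add: polyring_def)
lemma polyring_add[simp]: "p \<in> polyring n \<Longrightarrow> q \<in> polyring n \<Longrightarrow> p + q \<in> polyring n"
  unfolding polyring_def using keys_add[of p q] by blast
lemma polyring_uminus[simp]: "p \<in> polyring n \<Longrightarrow> - p \<in> polyring n"
  unfolding polyring_def by simp
lemma polyring_diff[simp]: "p \<in> polyring n \<Longrightarrow> q \<in> polyring n \<Longrightarrow> p - q \<in> polyring n"
  using polyring_add[of p n "-q"] by simp
lemma polyring_mult[simp]: "p \<in> polyring n \<Longrightarrow> q \<in> polyring n \<Longrightarrow> p * q \<in> polyring n"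
proof -
  assume hp: "p \<in> polyring n" and hq: "q \<in> polyring n"
  show ?thesis unfolding polyring_def
  proof (intro CollectI ballI)
    fix m assume "m \<in> Poly_Mapping.keys (p * q)"
    then obtain a b where "m = a + b" "a \<in> Poly_Mapping.keys p" "b \<in> Poly_Mapping.keys q"
      using keys_mult[of p q] by blast
    then show "Poly_Mapping.keys m \<subseteq> {1..n}" using hp hq unfolding polyring_def
      by (simp add: keys_add_nat)
  qed
qed
lemma polyring_Const[simp]: "Const c \<in> polyring n"
  by (simp add: polyring_def Const_def)
lemma polyring_1[simp]: "1 \<in> polyring n"
  using polyring_Const[of 1 n] by simp
lemma polyring_Var[simp]: "i \<in> {1..n} \<Longrightarrow> Var i \<in> polyring n"
  by (simp add: polyring_def Var_def)
lemma polyring_sum: "(\<And>x. x \<in> A \<Longrightarrow> f x \<in> polyring n) \<Longrightarrow> sum f A \<in> polyring n"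
  by (induction A rule: infinite_finite_induct) auto
lemma polyring_prod: "(\<And>x. x \<in> A \<Longrightarrow> f x \<in> polyring n) \<Longrightarrow> prod f A \<in> polyring n"
  by (induction A rule: infinite_finite_induct) auto
lemma polyring_power: "p \<in> polyring n \<Longrightarrow> p ^ e \<in> polyring n"
  by (induction e) auto

lemma subst_polyring: "(\<And>i. s i \<in> polyring n) \<Longrightarrow> subst s p \<in> polyring n"
  unfolding subst_def mmono_def
  by (intro polyring_sum polyring_mult polyring_Const polyring_prod polyring_power) auto

lemma subst_polyring_cong:
  assumes "p \<in> polyring n" "\<And>i. i \<in> {1..n} \<Longrightarrow> s i = t i"
  shows "subst s p = subst t p"
  unfolding subst_def mmono_def
proof (intro sum.cong refl arg_cong2[where f="(*)"] prod.cong)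
  fix m i assume "m \<in> Poly_Mapping.keys p" "i \<in> Poly_Mapping.keys m"
  then have "i \<in> {1..n}" using assms(1) unfolding polyring_def by blast
  then show "s i ^ Poly_Mapping.lookup m i = t i ^ Poly_Mapping.lookup m i" using assms(2) by simp
qed

lemma quotient_polyring:
  assumes "f \<in> polyring n" "l \<in> polyring n" "l \<noteq> 0" "f = l * g"
  shows "g \<in> polyring n"
proof -
  define r where "r = (\<lambda>i. if i \<in> {1..n} then Var i else 0)"
  have rp: "subst r g \<in> polyring n" by (rule subst_polyring) (auto simp: r_def)
  have "subst r f = f" "subst r l = l"
    using subst_polyring_cong[OF assms(1), of r Var] subst_polyring_cong[OF assms(2), of r Var]
    by (auto simp: r_def subst_Var_id)
  then have "l * g = l * subst r g" using assms(4) by (metis subst_mult)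
  then have "g = subst r g" using assms(3) by simp
  then show ?thesis using rp by simp
qed

lemma lookup_Var: "Poly_Mapping.lookup (Var a) (Poly_Mapping.single b 1) = (if a = b then 1 else 0)"
proof -
  have "Poly_Mapping.single a (1::nat) = Poly_Mapping.single b 1 \<Longrightarrow> a = b"
    by (metis lookup_single_eq lookup_single_not_eq one_neq_zero)
  then show ?thesis by (auto simp: Var_def lookup_single when_def)
qed

lemma nz_by_lookup: "Poly_Mapping.lookup p m \<noteq> 0 \<Longrightarrow> p \<noteq> 0" by auto


lemma Var_nz[simp]: "Var k \<noteq> 0"
  by (rule nz_by_lookup[of _ "Poly_Mapping.single k 1"]) (simp only: lookup_Var, simp)

lemma lin_nz:
  assumes "j \<noteq> k"
  shows "Var k - Var j \<noteq> 0" "Var k + Var j \<noteq> 0" "- Var k - Var j \<noteq> 0" "- Var k + Var j \<noteq> 0"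
    "- Var j - Var j \<noteq> 0"
proof -
  have a: "Poly_Mapping.lookup (Var k) (Poly_Mapping.single k 1) = 1"
    "Poly_Mapping.lookup (Var j) (Poly_Mapping.single k 1) = 0"
    "Poly_Mapping.lookup (Var j) (Poly_Mapping.single j 1) = 1"
    using assms by (simp_all only: lookup_Var, simp_all)
  show "Var k - Var j \<noteq> 0"
    by (rule nz_by_lookup[of _ "Poly_Mapping.single k 1"]) (simp only: lookup_minus a, simp)
  show "Var k + Var j \<noteq> 0"
    by (rule nz_by_lookup[of _ "Poly_Mapping.single k 1"]) (simp only: lookup_add a, simp)
  show "- Var k - Var j \<noteq> 0"
    by (rule nz_by_lookup[of _ "Poly_Mapping.single k 1"]) (simp only: lookup_minus lookup_uminus a, simp)
  show "- Var k + Var j \<noteq> 0"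
    by (rule nz_by_lookup[of _ "Poly_Mapping.single k 1"]) (simp only: lookup_add lookup_uminus a, simp)
  show "- Var j - Var j \<noteq> 0"
    by (rule nz_by_lookup[of _ "Poly_Mapping.single j 1"]) (simp only: lookup_minus lookup_uminus a, simp)
qed

definition Pf :: "nat set \<Rightarrow> nat \<Rightarrow> mpoly \<Rightarrow> mpoly" where
  "Pf S e t = t ^ e * (\<Prod>j\<in>S. (t - Var j) * (t + Var j))"

lemma subst_Pf:
  assumes "\<And>j. j \<in> S \<Longrightarrow> s j = Var j"
  shows "subst s (Pf S e t) = Pf S e (subst s t)"
  unfolding Pf_def using assms
  by (simp add: subst_mult subst_power subst_prod subst_diff subst_add)

lemma Pf_insert: "finite S \<Longrightarrow> j \<notin> S \<Longrightarrow> Pf (insert j S) e t = Pf S e t * ((t - Var j) * (t + Var j))"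
  by (simp add: Pf_def mult_ac)

lemma Pf_nz:
  assumes "finite S" "k \<notin> S" "t = Var k \<or> t = - Var k"
  shows "Pf S e t \<noteq> 0"
proof -
  have "t \<noteq> 0" using assms(3) by auto
  moreover have "(t - Var j) * (t + Var j) \<noteq> 0" if "j \<in> S" for j
  proof -
    have "j \<noteq> k" using that assms(2) by auto
    then show ?thesis using assms(3) lin_nz[of j k] by auto
  qed
  ultimately show ?thesis unfolding Pf_def using assms(1) by (simp add: prod_zero_iff)
qed

lemma Pf_diff_dvd: "d dvd a - b \<Longrightarrow> d dvd Pf S e a - Pf S e b"
  unfolding Pf_def
  by (intro dvd_diff_mult dvd_diff_power dvd_diff_prod) (auto simp: algebra_simps)

lemma Pf_odd: "Pf S 1 (- t) = - Pf S 1 t"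
proof -
  have "(\<Prod>j\<in>S. (- t - Var j) * (- t + Var j)) = (\<Prod>j\<in>S. (t - Var j) * (t + Var j))"
    by (rule prod.cong) (auto simp: algebra_simps)
  then show ?thesis by (simp add: Pf_def)
qed

lemma Pf_polyring: "t \<in> polyring n \<Longrightarrow> S \<subseteq> {1..n} \<Longrightarrow> Pf S e t \<in> polyring n"
  unfolding Pf_def by (intro polyring_mult polyring_power polyring_prod) auto

lemma Pf_factor:
  assumes "finite S" "j \<in> S"
  shows "(t - Var j) dvd Pf S e t" "(t + Var j) dvd Pf S e t"
proof -
  have "(t - Var j) * (t + Var j) dvd (\<Prod>j\<in>S. (t - Var j) * (t + Var j))"
    using assms by (rule dvd_prodI)
  note pr = this
  show "(t - Var j) dvd Pf S e t"
    unfolding Pf_def by (rule dvd_mult, rule dvd_trans[OF _ pr]) simp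
  show "(t + Var j) dvd Pf S e t"
    unfolding Pf_def by (rule dvd_mult, rule dvd_trans[OF _ pr]) simp
qed

lemma Pf_factor0: "(t::mpoly) dvd Pf S 1 t"
  by (simp add: Pf_def)

lemma Pf_dvd:
  assumes "finite S" "k \<notin> S" "e \<le> 1"
    "\<And>j. j \<in> S \<Longrightarrow> (Var k - Var j) dvd f \<and> (Var k + Var j) dvd f" "e = 1 \<Longrightarrow> Var k dvd f"
  shows "Pf S e (Var k) dvd f"
  using assms(1,2,4)
proof (induction S rule: finite_induct)
  case empty
  show ?case
  proof (cases "e = 0")
    case True then show ?thesis by (simp add: Pf_def)
  next
    case False then have "e = 1" using assms(3) by simp
    then show ?thesis using assms(5) by (simp add: Pf_def)
  qed
next
  case (insert j S)
  have jk: "j \<noteq> k" using insert by auto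
  have kS: "k \<notin> S" using insert by auto
  obtain g where f: "f = Pf S e (Var k) * g" using insert by blast
  define s1 where "s1 = Var(k := Var j)"
  have fix1: "\<And>j'. j' \<in> S \<Longrightarrow> s1 j' = Var j'" using kS by (auto simp: s1_def)
  obtain h where h: "f = (Var k - Var j) * h" using insert.prems(2)[of j] by auto
  have "subst s1 f = 0" unfolding h by (simp add: subst_mult subst_diff s1_def)
  moreover have "subst s1 (Pf S e (Var k)) = Pf S e (Var j)"
    using subst_Pf[of S s1 e "Var k", OF fix1] by (simp add: s1_def)
  ultimately have "Pf S e (Var j) * subst s1 g = 0"
    using f by (simp add: subst_mult)
  moreover have "Pf S e (Var j) \<noteq> 0" using Pf_nz[of S j] insert by auto
  ultimately have "subst s1 g = 0" by simp
  then have "(Var k - Var j) dvd g" using subst_kernel unfolding s1_def by blast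
  then obtain g' where g: "g = (Var k - Var j) * g'" by auto
  define s2 where "s2 = Var(k := - Var j)"
  have fix2: "\<And>j'. j' \<in> S \<Longrightarrow> s2 j' = Var j'" using kS by (auto simp: s2_def)
  obtain h2 where h2: "f = (Var k + Var j) * h2" using insert.prems(2)[of j] by auto
  have "subst s2 f = 0" unfolding h2 using jk by (simp add: subst_mult subst_add s2_def)
  moreover have "subst s2 (Pf S e (Var k)) = Pf S e (- Var j)"
    using subst_Pf[of S s2 e "Var k", OF fix2] by (simp add: s2_def)
  moreover have "subst s2 (Var k - Var j) = - Var j - Var j"
    using jk by (simp add: subst_diff s2_def)
  ultimately have "Pf S e (- Var j) * ((- Var j - Var j) * subst s2 g') = 0"
    using f g by (simp add: subst_mult)
  moreover have "Pf S e (- Var j) \<noteq> 0" using Pf_nz[of S j] insert by auto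
  moreover have "- Var j - Var j \<noteq> 0" using lin_nz(5)[OF jk] .
  ultimately have "subst s2 g' = 0" by simp
  then have "(Var k - - Var j) dvd g'" using subst_kernel unfolding s2_def by blast
  then obtain g'' where g': "g' = (Var k + Var j) * g''" by auto
  have "f = Pf (insert j S) e (Var k) * g''"
    using f g g' Pf_insert[OF insert(1,2)] by (simp add: mult_ac)
  then show ?case by auto
qed


lemma dvd_to_ex:
  assumes "F \<in> polyring n" "L \<in> polyring n" "L \<noteq> 0" "L dvd F"
  shows "\<exists>g\<in>polyring n. F = L * g"
proof -
  obtain g where g: "F = L * g" using assms(4) by auto
  then have "g \<in> polyring n" using quotient_polyring[OF assms(1,2,3)] by blast
  then show ?thesis using g by blast
qed

lemma apply_der_single:
  assumes "j \<in> {1..n}"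
  shows "apply_der n \<theta> (\<lambda>m. if m = j then 1 else 0) = \<theta> j"
    "linform n (\<lambda>m. if m = j then 1 else 0) = Var j"
proof -
  have "apply_der n \<theta> (\<lambda>m. if m = j then 1 else 0) = (\<Sum>m\<in>{1..n}. if m = j then \<theta> j else 0)"
    unfolding apply_der_def by (rule sum.cong) auto
  then show "apply_der n \<theta> (\<lambda>m. if m = j then 1 else 0) = \<theta> j" using assms by simp
  have "linform n (\<lambda>m. if m = j then 1 else 0) = (\<Sum>m\<in>{1..n}. if m = j then Var j else 0)"
    unfolding linform_def by (rule sum.cong) auto
  then show "linform n (\<lambda>m. if m = j then 1 else 0) = Var j" using assms by simp
qed

lemma apply_der_pair:
  assumes "j \<in> {1..n}" "i \<in> {1..n}" "j \<noteq> i"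
  shows "apply_der n \<theta> (\<lambda>m. if m = j then 1 else if m = i then c else 0) = \<theta> j + Const c * \<theta> i"
    "linform n (\<lambda>m. if m = j then 1 else if m = i then c else 0) = Var j + Const c * Var i"
proof -
  have "apply_der n \<theta> (\<lambda>m. if m = j then 1 else if m = i then c else 0)
      = (\<Sum>m\<in>{1..n}. (if m = j then \<theta> j else 0) + (if m = i then Const c * \<theta> i else 0))"
    unfolding apply_der_def by (rule sum.cong) (use assms in auto)
  then show "apply_der n \<theta> (\<lambda>m. if m = j then 1 else if m = i then c else 0) = \<theta> j + Const c * \<theta> i"
    using assms by (simp add: sum.distrib)
  have "linform n (\<lambda>m. if m = j then 1 else if m = i then c else 0)
      = (\<Sum>m\<in>{1..n}. (if m = j then Var j else 0) + (if m = i then Const c * Var i else 0))"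
    unfolding linform_def by (rule sum.cong) (use assms in auto)
  then show "linform n (\<lambda>m. if m = j then 1 else if m = i then c else 0) = Var j + Const c * Var i"
    using assms by (simp add: sum.distrib)
qed

definition SJ :: "nat set \<Rightarrow> nat \<Rightarrow> nat set" where
  "SJ J k = {j. 1 \<le> j \<and> j < k \<and> j \<notin> J}"

definition eJ :: "nat set \<Rightarrow> nat \<Rightarrow> nat" where
  "eJ J k = (if k \<in> J then 0 else 1)"

definition phi :: "nat \<Rightarrow> nat set \<Rightarrow> nat \<Rightarrow> nat \<Rightarrow> mpoly" where
  "phi n J k = (\<lambda>i. if k \<le> i \<and> i \<le> n \<and> (k \<notin> J \<or> i = k) then Pf (SJ J k) (eJ J k) (Var i) else 0)"

lemma SJ_finite[simp]: "finite (SJ J k)" by (simp add: SJ_def)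
lemma SJ_notin[simp]: "k \<notin> SJ J k" by (simp add: SJ_def)
lemma SJ_sub: "k \<le> n \<Longrightarrow> SJ J k \<subseteq> {1..n}" by (auto simp: SJ_def)

lemma phi_below: "j < k \<Longrightarrow> phi n J k j = 0" by (simp add: phi_def)
lemma phi_diag: "k \<in> {1..n} \<Longrightarrow> phi n J k k = Pf (SJ J k) (eJ J k) (Var k)" by (simp add: phi_def)
lemma d_nz: "Pf (SJ J k) (eJ J k) (Var k) \<noteq> 0" by (rule Pf_nz) auto

lemma phi_polyring:
  assumes "k \<in> {1..n}" shows "phi n J k i \<in> polyring n"
  using assms by (auto simp: phi_def intro!: Pf_polyring SJ_sub)

lemma phi_derivs:
  assumes "k \<in> {1..n}" shows "phi n J k \<in> derivs n"
proof -
  have "\<forall>i\<in>{1..n}. phi n J k i \<in> polyring n" using phi_polyring[OF assms] by blast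
  moreover have "\<forall>i. i \<notin> {1..n} \<longrightarrow> phi n J k i = 0" using assms by (auto simp: phi_def)
  ultimately show ?thesis by (simp add: derivs_def)
qed


lemma phi_Der:
  assumes k: "k \<in> {1..n}"
  shows "phi n J k \<in> Der n (B_arr n J)"
proof -
  define S where "S = SJ J k"
  define e where "e = eJ J k"
  define K where "K = (\<lambda>i. k \<le> i \<and> i \<le> n \<and> (k \<notin> J \<or> i = k))"
  have ph: "\<And>i. phi n J k i = (if K i then Pf S e (Var i) else 0)"
    unfolding phi_def K_def S_def e_def by (rule refl)
  have fS: "finite S" by (simp add: S_def)
  have pp: "\<And>i. phi n J k i \<in> polyring n" using phi_polyring[OF k] .
  have e1: "k \<notin> J \<Longrightarrow> e = 1" by (simp add: e_def eJ_def)
  have inS: "\<And>j. j \<in> {1..n} \<Longrightarrow> j \<notin> J \<Longrightarrow> j < k \<Longrightarrow> j \<in> S" by (auto simp: S_def SJ_def)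
  have "\<forall>a\<in>B_arr n J. \<exists>g\<in>polyring n. apply_der n (phi n J k) a = linform n a * g"
  proof
    fix a assume "a \<in> B_arr n J"
    then consider (c1) j where "a = (\<lambda>m. if m = j then 1 else 0)" "j \<in> {1..n} - J"
      | (c2) j i where "a = (\<lambda>m. if m = j then 1 else if m = i then -1 else 0)" "j \<in> {1..n} - J" "j < i" "i \<le> n"
      | (c3) j i where "a = (\<lambda>m. if m = j then 1 else if m = i then 1 else 0)" "j \<in> {1..n} - J" "j < i" "i \<le> n"
      unfolding B_arr_def by blast
    then show "\<exists>g\<in>polyring n. apply_der n (phi n J k) a = linform n a * g"
    proof cases
      case c1
      have "Var j dvd phi n J k j"
      proof (cases "K j")
        case True
        then have "k \<notin> J" using c1 by (auto simp: K_def)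
        then show ?thesis using True e1 Pf_factor0[where t="Var j" and S=S] by (simp add: ph)
      qed (simp add: ph)
      then show ?thesis using c1 apply_der_single(1)[of j n "phi n J k"] apply_der_single(2)[of j n]
        by (intro dvd_to_ex) (auto simp: pp)
    next
      case c2
      have ij: "j \<in> {1..n}" "i \<in> {1..n}" "j \<noteq> i" using c2 by auto
      have "(Var j - Var i) dvd phi n J k j - phi n J k i"
      proof (cases "K j")
        case True
        then have "K i" using c2 by (auto simp: K_def)
        with True show ?thesis by (simp add: ph Pf_diff_dvd)
      next
        case False
        show ?thesis
        proof (cases "K i")
          case True
          then have "j < k" using False c2 by (auto simp: K_def)
          then have "j \<in> S" using inS c2 by auto
          then have "(Var i - Var j) dvd Pf S e (Var i)" using Pf_factor fS by blast
          then have "(Var j - Var i) dvd Pf S e (Var i)" by (metis minus_diff_eq minus_dvd_iff)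
          then show ?thesis using True False by (simp add: ph)
        qed (simp add: ph False)
      qed
      moreover have "Var j - Var i \<noteq> 0" using lin_nz(1)[of i j] ij by auto
      ultimately show ?thesis using c2 apply_der_pair(1)[OF ij, of "phi n J k" "-1"] apply_der_pair(2)[OF ij, of "-1"]
        by (intro dvd_to_ex) (auto simp: pp Const_uminus ij)
    next
      case c3
      have ij: "j \<in> {1..n}" "i \<in> {1..n}" "j \<noteq> i" using c3 by auto
      have "(Var j + Var i) dvd phi n J k j + phi n J k i"
      proof (cases "K j")
        case True
        then have "K i" "k \<notin> J" using c3 by (auto simp: K_def)
        then have "e = 1" using e1 by simp
        have "(Var j - - Var i) dvd Pf S 1 (Var j) - Pf S 1 (- Var i)" by (rule Pf_diff_dvd) simp
        then have "(Var j + Var i) dvd Pf S 1 (Var j) + Pf S 1 (Var i)" using Pf_odd[of S "Var i"] by simp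
        with True \<open>K i\<close> \<open>e = 1\<close> show ?thesis by (simp add: ph)
      next
        case False
        show ?thesis
        proof (cases "K i")
          case True
          then have "j < k" using False c3 by (auto simp: K_def)
          then have "j \<in> S" using inS c3 by auto
          then have "(Var i + Var j) dvd Pf S e (Var i)" using Pf_factor fS by blast
          then have "(Var j + Var i) dvd Pf S e (Var i)" by (simp add: algebra_simps)
          then show ?thesis using True False by (simp add: ph)
        qed (simp add: ph False)
      qed
      moreover have "Var j + Var i \<noteq> 0" using lin_nz(2)[of i j] ij by (auto simp: add.commute)
      ultimately show ?thesis using c3 apply_der_pair(1)[OF ij, of "phi n J k" "1"] apply_der_pair(2)[OF ij, of "1"]
        by (intro dvd_to_ex) (auto simp: pp ij)
    qed
  qed
  then show ?thesis using phi_derivs[OF k] by (simp add: Der_def)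
qed


lemma apply_der_lin: "apply_der n (\<lambda>i. \<theta> i - q * \<phi> i) a = apply_der n \<theta> a - q * apply_der n \<phi> a"
proof -
  have "apply_der n (\<lambda>i. \<theta> i - q * \<phi> i) a = (\<Sum>i=1..n. Const (a i) * \<theta> i - q * (Const (a i) * \<phi> i))"
    unfolding apply_der_def by (rule sum.cong) (simp_all add: right_diff_distrib mult.left_commute)
  also have "\<dots> = apply_der n \<theta> a - q * apply_der n \<phi> a"
    unfolding apply_der_def by (simp only: sum_subtractf sum_distrib_left)
  finally show ?thesis .
qed

lemma Der_closed:
  assumes "\<theta> \<in> Der n A" "\<phi> \<in> Der n A" "q \<in> polyring n"
  shows "(\<lambda>i. \<theta> i - q * \<phi> i) \<in> Der n A"
proof -
  have T: "\<theta> \<in> derivs n" "\<forall>a\<in>A. \<exists>g\<in>polyring n. apply_der n \<theta> a = linform n a * g"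
    using assms(1) by (simp_all add: Der_def)
  have P: "\<phi> \<in> derivs n" "\<forall>a\<in>A. \<exists>g\<in>polyring n. apply_der n \<phi> a = linform n a * g"
    using assms(2) by (simp_all add: Der_def)
  have "(\<lambda>i. \<theta> i - q * \<phi> i) \<in> derivs n"
    using T(1) P(1) assms(3) unfolding derivs_def by simp
  moreover have "\<forall>a\<in>A. \<exists>g\<in>polyring n. apply_der n (\<lambda>i. \<theta> i - q * \<phi> i) a = linform n a * g"
  proof
    fix a assume a: "a \<in> A"
    obtain g1 where g1: "g1 \<in> polyring n" "apply_der n \<theta> a = linform n a * g1"
      using T(2) a by blast
    obtain g2 where g2: "g2 \<in> polyring n" "apply_der n \<phi> a = linform n a * g2"
      using P(2) a by blast
    have "apply_der n (\<lambda>i. \<theta> i - q * \<phi> i) a = linform n a * (g1 - q * g2)"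
      unfolding apply_der_lin g1(2) g2(2) by (simp add: right_diff_distrib mult.left_commute)
    moreover have "g1 - q * g2 \<in> polyring n" using g1(1) g2(1) assms(3) by simp
    ultimately show "\<exists>g\<in>polyring n. apply_der n (\<lambda>i. \<theta> i - q * \<phi> i) a = linform n a * g" by blast
  qed
  ultimately show ?thesis by (simp add: Der_def)
qed

lemma diag_dvd:
  assumes "\<theta> \<in> Der n (B_arr n J)" "k \<in> {1..n}" "\<And>j. j < k \<Longrightarrow> \<theta> j = 0"
  shows "Pf (SJ J k) (eJ J k) (Var k) dvd \<theta> k"
proof (rule Pf_dvd)
  have DA: "\<forall>a\<in>B_arr n J. \<exists>g\<in>polyring n. apply_der n \<theta> a = linform n a * g"
    using assms(1) by (simp add: Der_def)
  show "eJ J k \<le> 1" by (simp add: eJ_def)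
  fix j assume jS: "j \<in> SJ J k"
  then have ij: "j \<in> {1..n}" "k \<in> {1..n}" "j \<noteq> k" "j < k" "j \<notin> J" using assms(2) by (auto simp: SJ_def)
  have m1: "(\<lambda>m. if m = j then 1 else if m = k then -1 else 0) \<in> B_arr n J"
    unfolding B_arr_def
    by (rule UnI1, rule UnI2, rule CollectI, rule exI[of _ j], rule exI[of _ k]) (use ij assms(2) in auto)
  have p1: "(\<lambda>m. if m = j then 1 else if m = k then 1 else 0) \<in> B_arr n J"
    unfolding B_arr_def
    by (rule UnI2, rule CollectI, rule exI[of _ j], rule exI[of _ k]) (use ij assms(2) in auto)
  obtain g where "apply_der n \<theta> (\<lambda>m. if m = j then 1 else if m = k then -1 else 0)
      = linform n (\<lambda>m. if m = j then 1 else if m = k then -1 else 0) * g"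
    using DA m1 by blast
  then have "\<theta> j + - \<theta> k = (Var j + - Var k) * g"
    using apply_der_pair(1)[OF ij(1,2,3), of \<theta> "-1"] apply_der_pair(2)[OF ij(1,2,3), of "-1"]
    by (simp add: Const_uminus)
  then have "- \<theta> k = - ((Var k - Var j) * g)" using assms(3)[OF ij(4)] by (simp add: right_diff_distrib left_diff_distrib)
  then have "\<theta> k = (Var k - Var j) * g" by (simp only: neg_equal_iff_equal)
  then have d1: "(Var k - Var j) dvd \<theta> k" by simp
  obtain g' where "apply_der n \<theta> (\<lambda>m. if m = j then 1 else if m = k then 1 else 0)
      = linform n (\<lambda>m. if m = j then 1 else if m = k then 1 else 0) * g'"
    using DA p1 by blast
  then have "\<theta> j + \<theta> k = (Var j + Var k) * g'"
    using apply_der_pair(1)[OF ij(1,2,3), of \<theta> "1"] apply_der_pair(2)[OF ij(1,2,3), of "1"]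
    by simp
  then have "\<theta> k = (Var k + Var j) * g'" using assms(3)[OF ij(4)] by (simp add: add.commute)
  then have "(Var k + Var j) dvd \<theta> k" by simp
  with d1 show "(Var k - Var j) dvd \<theta> k \<and> (Var k + Var j) dvd \<theta> k" by simp
next
  assume "eJ J k = 1"
  have "k \<notin> J"
  proof
    assume "k \<in> J"
    then have "eJ J k = 0" by (simp add: eJ_def)
    with \<open>eJ J k = 1\<close> show False by simp
  qed
  then have kJ: "k \<in> {1..n} - J" using assms(2) by simp
  have "(\<lambda>m. if m = k then 1 else 0) \<in> B_arr n J"
    unfolding B_arr_def
    by (rule UnI1, rule UnI1, rule CollectI, rule exI[of _ k]) (use kJ in auto)
  moreover have DA: "\<forall>a\<in>B_arr n J. \<exists>g\<in>polyring n. apply_der n \<theta> a = linform n a * g"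
    using assms(1) by (simp add: Der_def)
  ultimately obtain g where "apply_der n \<theta> (\<lambda>m. if m = k then 1 else 0) = linform n (\<lambda>m. if m = k then 1 else 0) * g"
    by blast
  then have "\<theta> k = Var k * g" using apply_der_single[of k n] assms(2) by simp
  then show "Var k dvd \<theta> k" by simp
qed auto


lemma span_aux:
  assumes "1 \<le> k" "k \<le> n + 1"
  shows "\<forall>\<theta>\<in>Der n (B_arr n J). (\<forall>j<k. \<theta> j = 0) \<longrightarrow>
           (\<exists>c. (\<forall>m. c m \<in> polyring n) \<and> \<theta> = (\<lambda>i. \<Sum>m\<in>{k..n}. c m * phi n J m i))"
  using assms(2)
proof (induction k rule: inc_induct)
  case base
  show ?case
  proof (intro ballI impI)
    fix \<theta> assume th: "\<theta> \<in> Der n (B_arr n J)" and z: "\<forall>j<n+1. \<theta> j = 0"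
    have "\<theta> \<in> derivs n" using th by (simp add: Der_def)
    then have "\<And>i. i \<notin> {1..n} \<Longrightarrow> \<theta> i = 0" by (simp add: derivs_def)
    note zz = this
    have "\<theta> = (\<lambda>i. 0)"
    proof
      fix i show "\<theta> i = 0"
      proof (cases "i \<in> {1..n}")
        case True then have "i < n + 1" by simp
        with z show ?thesis by blast
      next
        case False with zz show ?thesis by blast
      qed
    qed
    then show "\<exists>c. (\<forall>m. c m \<in> polyring n) \<and> \<theta> = (\<lambda>i. \<Sum>m\<in>{n+1..n}. c m * phi n J m i)"
      by (intro exI[of _ "\<lambda>_. 0"]) simp
  qed
next
  case (step k0)
  have k0: "k0 \<in> {1..n}" using step.hyps assms(1) by simp
  show ?case
  proof (intro ballI impI)
    fix \<theta> assume th: "\<theta> \<in> Der n (B_arr n J)" and z: "\<forall>j<k0. \<theta> j = 0"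
    have "\<theta> \<in> derivs n" using th by (simp add: Der_def)
    then have tp: "\<theta> k0 \<in> polyring n" using k0 by (simp add: derivs_def)
    let ?d = "Pf (SJ J k0) (eJ J k0) (Var k0)"
    have "?d dvd \<theta> k0" using diag_dvd[OF th k0] z by blast
    moreover have "?d \<in> polyring n" using k0 by (intro Pf_polyring SJ_sub) auto
    ultimately obtain q where q: "q \<in> polyring n" "\<theta> k0 = ?d * q"
      using dvd_to_ex[OF tp _ d_nz] by blast
    define \<theta>' where "\<theta>' = (\<lambda>i. \<theta> i - q * phi n J k0 i)"
    have th': "\<theta>' \<in> Der n (B_arr n J)" unfolding \<theta>'_def by (rule Der_closed[OF th phi_Der[OF k0] q(1)])
    have "\<forall>j<Suc k0. \<theta>' j = 0"
    proof (intro allI impI)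
      fix j assume "j < Suc k0"
      then consider "j < k0" | "j = k0" by linarith
      then show "\<theta>' j = 0"
      proof cases
        case 1 then show ?thesis using z by (simp add: \<theta>'_def phi_below)
      next
        case 2 then show ?thesis using q(2) k0 by (simp add: \<theta>'_def phi_diag mult.commute)
      qed
    qed
    then obtain c where c: "\<forall>m. c m \<in> polyring n" "\<theta>' = (\<lambda>i. \<Sum>m\<in>{Suc k0..n}. c m * phi n J m i)"
      using step.IH th' by blast
    define c' where "c' = c(k0 := q)"
    have "\<theta> = (\<lambda>i. \<Sum>m\<in>{k0..n}. c' m * phi n J m i)"
    proof
      fix i
      have "{k0..n} = insert k0 {Suc k0..n}" using k0 by auto
      then have "(\<Sum>m\<in>{k0..n}. c' m * phi n J m i) = c' k0 * phi n J k0 i + (\<Sum>m\<in>{Suc k0..n}. c' m * phi n J m i)"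
        by simp
      also have "(\<Sum>m\<in>{Suc k0..n}. c' m * phi n J m i) = (\<Sum>m\<in>{Suc k0..n}. c m * phi n J m i)"
        by (rule sum.cong) (auto simp: c'_def)
      also have "\<dots> = \<theta>' i" using c(2) by simp
      finally show "\<theta> i = (\<Sum>m\<in>{k0..n}. c' m * phi n J m i)" by (simp add: c'_def \<theta>'_def)
    qed
    moreover have "\<forall>m. c' m \<in> polyring n" using c(1) q(1) by (simp add: c'_def)
    ultimately show "\<exists>c. (\<forall>m. c m \<in> polyring n) \<and> \<theta> = (\<lambda>i. \<Sum>m\<in>{k0..n}. c m * phi n J m i)"
      by blast
  qed
qed

lemma phi_inj: "inj_on (phi n J) {1..n}"
proof (rule inj_onI)
  fix a b assume ab: "a \<in> {1..n}" "b \<in> {1..n}" "phi n J a = phi n J b"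
  show "a = b"
  proof (rule ccontr)
    assume "a \<noteq> b"
    then consider "a < b" | "b < a" by linarith
    then show False
    proof cases
      case 1
      have "phi n J a a = phi n J b a" using ab by simp
      then show False using 1 ab phi_diag[of a n J] phi_below[of a b n J] d_nz[of J a] by simp
    next
      case 2
      have "phi n J b b = phi n J a b" using ab by simp
      then show False using 2 ab phi_diag[of b n J] phi_below[of b a n J] d_nz[of J b] by simp
    qed
  qed
qed

lemma indep:
  assumes "F \<subseteq> phi n J ` {1..n}" "finite F"
    "(\<lambda>i. \<Sum>b\<in>F. c b * b i) = (\<lambda>i. 0)"
  shows "\<forall>b\<in>F. c b = 0"
proof -
  have main: "k \<in> {1..n} \<Longrightarrow> phi n J k \<in> F \<Longrightarrow> c (phi n J k) = 0" for k
  proof (induction k rule: less_induct)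
    case (less k)
    have "(\<Sum>b\<in>F. c b * b k) = 0" using assms(3) by metis
    moreover have "(\<Sum>b\<in>F. c b * b k) = c (phi n J k) * phi n J k k + (\<Sum>b\<in>F - {phi n J k}. c b * b k)"
      using less.prems assms(2) by (simp add: sum.remove)
    moreover have "(\<Sum>b\<in>F - {phi n J k}. c b * b k) = 0"
    proof (rule sum.neutral, rule ballI)
      fix b assume b: "b \<in> F - {phi n J k}"
      then obtain m where m: "m \<in> {1..n}" "b = phi n J m" using assms(1) by blast
      then have "m \<noteq> k" using b by auto
      then consider "m < k" | "k < m" by linarith
      then show "c b * b k = 0"
      proof cases
        case 1 then show ?thesis using less.IH[of m] m b by auto
      next
        case 2 then show ?thesis using m phi_below[of k m n J] by simp
      qed
    qed
    ultimately have "c (phi n J k) * phi n J k k = 0" by simp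
    then show ?case using phi_diag[OF less.prems(1), of J] d_nz[of J k] by simp
  qed
  show ?thesis
  proof
    fix b assume "b \<in> F"
    then obtain k where "k \<in> {1..n}" "b = phi n J k" using assms(1) by blast
    then show "c b = 0" using main \<open>b \<in> F\<close> by blast
  qed
qed

theorem mainTheorem14:
  fixes n :: nat and J :: "nat set"
  assumes "J \<subseteq> {1..n}"
  shows "free_submodule n (Der n (B_arr n J))"
  unfolding free_submodule_def
proof (rule exI[of _ "phi n J ` {1..n}"], intro conjI)
  show "phi n J ` {1..n} \<subseteq> Der n (B_arr n J)" using phi_Der by blast
next
  show "\<forall>\<theta>\<in>Der n (B_arr n J). \<exists>F c. finite F \<and> F \<subseteq> phi n J ` {1..n} \<and> (\<forall>b\<in>F. c b \<in> polyring n) \<and>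
                     \<theta> = (\<lambda>i. \<Sum>b\<in>F. c b * b i)"
  proof
  fix \<theta> assume th: "\<theta> \<in> Der n (B_arr n J)"
  have "\<theta> \<in> derivs n" using th by (simp add: Der_def)
  then have "\<theta> 0 = 0" by (simp add: derivs_def)
  then have "\<forall>j<1. \<theta> j = 0" by simp
  then obtain c where c: "\<forall>m. c m \<in> polyring n" "\<theta> = (\<lambda>i. \<Sum>m\<in>{1..n}. c m * phi n J m i)"
    using span_aux[of 1 n J] th by auto
  define c' where "c' = (\<lambda>b. c (inv_into {1..n} (phi n J) b))"
  have "\<theta> = (\<lambda>i. \<Sum>b\<in>phi n J ` {1..n}. c' b * b i)"
  proof
    fix i
    have "(\<Sum>b\<in>phi n J ` {1..n}. c' b * b i) = (\<Sum>m\<in>{1..n}. c' (phi n J m) * phi n J m i)"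
      by (rule sum.reindex[OF phi_inj, unfolded comp_def])
    also have "\<dots> = (\<Sum>m\<in>{1..n}. c m * phi n J m i)"
    proof (rule sum.cong[OF refl])
      fix m assume "m \<in> {1..n}"
      then have "inv_into {1..n} (phi n J) (phi n J m) = m" by (rule inv_into_f_f[OF phi_inj])
      then show "c' (phi n J m) * phi n J m i = c m * phi n J m i" by (simp add: c'_def)
    qed
    finally show "\<theta> i = (\<Sum>b\<in>phi n J ` {1..n}. c' b * b i)" using c(2) by simp
  qed
  moreover have "\<forall>b\<in>phi n J ` {1..n}. c' b \<in> polyring n" using c(1) by (simp add: c'_def)
  ultimately show "\<exists>F c. finite F \<and> F \<subseteq> phi n J ` {1..n} \<and> (\<forall>b\<in>F. c b \<in> polyring n) \<and>
                     \<theta> = (\<lambda>i. \<Sum>b\<in>F. c b * b i)"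
    by (intro exI[of _ "phi n J ` {1..n}"] exI[of _ c']) auto
  qed
next
  show "\<forall>F c. finite F \<longrightarrow> F \<subseteq> phi n J ` {1..n} \<longrightarrow> (\<forall>b\<in>F. c b \<in> polyring n) \<longrightarrow>
               (\<lambda>i. \<Sum>b\<in>F. c b * b i) = (\<lambda>i. 0) \<longrightarrow> (\<forall>b\<in>F. c b = 0)"
  proof (intro allI impI ballI)
  fix F c b
  assume "finite F" "F \<subseteq> phi n J ` {1..n}" "\<forall>b\<in>F. c b \<in> polyring n"
    "(\<lambda>i. \<Sum>b\<in>F. c b * b i) = (\<lambda>i. 0)" "b \<in> F"
  then show "c b = 0" using indep[of F n J c] by blast
  qed
qed

end
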